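(* Let $S$ be a skew lattice that is strongly distributive or co-strongly distributive. Then $S$ is a left distributive solution of the Yang–Baxter equation.
   Context: A skew lattice is a set $S$ with two binary operations $\wedge,\vee$, each idempotent and associative, satisfying the absorption laws $x\wedge(x\vee y)=x=x\vee(x\wedge y)$ and $(x\wedge y)\vee y=y=(x\vee y)\wedge y$ for all $x,y\in S$. $S$ is strongly distributive if it satisfies $(x\vee y)\wedge z=(x\wedge z)\vee(y\wedge z)$ and $x\wedge(y\vee z)=(x\wedge y)\vee(x\wedge z)$; it is co-strongly distributive if it satisfies $(x\wedge y)\vee z=(x\vee z)\wedge(y\vee z)$ and $x\vee(y\wedge z)=(x\vee y)\wedge(x\vee z)$. $S$ is a left distributive solution if $r_L(x,y)=(x\wedge y,y\vee x)$ satisfies $(r_L\times\mathrm{id})\circ(\mathrm{id}\times r_L)\circ(r_L\times\mathrm{id})=(\mathrm{id}\times r_L)\circ(r_L\times\mathrm{id})\circ(\mathrm{id}\times r_L)$. *)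

theory Defs
  imports Main
begin

definition skew_lattice :: "('a \<Rightarrow> 'a \<Rightarrow> 'a) \<Rightarrow> ('a \<Rightarrow> 'a \<Rightarrow> 'a) \<Rightarrow> bool" where
  "skew_lattice meet join \<longleftrightarrow>
     (\<forall>x. meet x x = x) \<and> (\<forall>x. join x x = x) \<and>
     (\<forall>x y z. meet (meet x y) z = meet x (meet y z)) \<and>
     (\<forall>x y z. join (join x y) z = join x (join y z)) \<and>
     (\<forall>x y. meet x (join x y) = x \<and> join x (meet x y) = x) \<and>
     (\<forall>x y. join (meet x y) y = y \<and> meet (join x y) y = y)"

definition strongly_distributive :: "('a \<Rightarrow> 'a \<Rightarrow> 'a) \<Rightarrow> ('a \<Rightarrow> 'a \<Rightarrow> 'a) \<Rightarrow> bool" where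
  "strongly_distributive meet join \<longleftrightarrow>
     (\<forall>x y z. meet (join x y) z = join (meet x z) (meet y z)) \<and>
     (\<forall>x y z. meet x (join y z) = join (meet x y) (meet x z))"

definition co_strongly_distributive :: "('a \<Rightarrow> 'a \<Rightarrow> 'a) \<Rightarrow> ('a \<Rightarrow> 'a \<Rightarrow> 'a) \<Rightarrow> bool" where
  "co_strongly_distributive meet join \<longleftrightarrow>
     (\<forall>x y z. join (meet x y) z = meet (join x z) (join y z)) \<and>
     (\<forall>x y z. join x (meet y z) = meet (join x y) (join x z))"

definition r_L :: "('a \<Rightarrow> 'a \<Rightarrow> 'a) \<Rightarrow> ('a \<Rightarrow> 'a \<Rightarrow> 'a) \<Rightarrow> 'a \<times> 'a \<Rightarrow> 'a \<times> 'a" where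
  "r_L meet join p = (meet (fst p) (snd p), join (snd p) (fst p))"

definition r12 :: "('a \<times> 'a \<Rightarrow> 'a \<times> 'a) \<Rightarrow> 'a \<times> 'a \<times> 'a \<Rightarrow> 'a \<times> 'a \<times> 'a" where
  "r12 r t = (case t of (x, y, z) \<Rightarrow> (case r (x, y) of (u, v) \<Rightarrow> (u, v, z)))"

definition r23 :: "('a \<times> 'a \<Rightarrow> 'a \<times> 'a) \<Rightarrow> 'a \<times> 'a \<times> 'a \<Rightarrow> 'a \<times> 'a \<times> 'a" where
  "r23 r t = (case t of (x, y, z) \<Rightarrow> (case r (y, z) of (v, w) \<Rightarrow> (x, v, w)))"

definition braided :: "('a \<times> 'a \<Rightarrow> 'a \<times> 'a) \<Rightarrow> bool" where
  "braided r \<longleftrightarrow> r12 r \<circ> r23 r \<circ> r12 r = r23 r \<circ> r12 r \<circ> r23 r"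

definition left_distributive_solution :: "('a \<Rightarrow> 'a \<Rightarrow> 'a) \<Rightarrow> ('a \<Rightarrow> 'a \<Rightarrow> 'a) \<Rightarrow> bool" where
  "left_distributive_solution meet join \<longleftrightarrow> braided (r_L meet join)"

end

theory Submission
  imports Defs
begin

lemma sd:
  fixes m j :: "'a \<Rightarrow> 'a \<Rightarrow> 'a"
  assumes a1: "\<And>x y z. m (m x y) z = m x (m y z)"
  and a2: "\<And>x y z. j (j x y) z = j x (j y z)"
  and b1: "\<And>x y. m x (j x y) = x" and b3: "\<And>x y. j (m x y) y = y"
  and d1: "\<And>x y z. m (j x y) z = j (m x z) (m y z)"
  and d2: "\<And>x y z. m x (j y z) = j (m x y) (m x z)"
  shows "j (m (j y x) z) (m x y) = m (j (m y z) x) (j z y)"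
  by (smt (verit, ccfv_threshold) a2 b1 b3 d1 d2)

lemma csd:
  fixes m j :: "'a \<Rightarrow> 'a \<Rightarrow> 'a"
  assumes a1: "\<And>x y z. m (m x y) z = m x (m y z)"
  and b2: "\<And>x y. j x (m x y) = x" and b4: "\<And>x y. m (j x y) y = y"
  and d1: "\<And>x y z. j (m x y) z = m (j x z) (j y z)"
  and d2: "\<And>x y z. j x (m y z) = m (j x y) (j x z)"
  shows "j (m (j y x) z) (m x y) = m (j (m y z) x) (j z y)"
  by (smt (verit) a1 b2 b4 d1 d2)

theorem mainTheorem11:
  fixes meet join :: "'a \<Rightarrow> 'a \<Rightarrow> 'a"
  assumes "skew_lattice meet join"
    and "strongly_distributive meet join \<or> co_strongly_distributive meet join"
  shows "left_distributive_solution meet join"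
proof -
  have mid: "\<And>x y z. join (meet (join y x) z) (meet x y) = meet (join (meet y z) x) (join z y)"
    using assms(2)
  proof
    fix x y z assume "strongly_distributive meet join"
    then show "join (meet (join y x) z) (meet x y) = meet (join (meet y z) x) (join z y)"
      using assms(1) unfolding strongly_distributive_def skew_lattice_def
      by (intro sd[where m=meet and j=join]) auto
  next
    fix x y z assume "co_strongly_distributive meet join"
    then show "join (meet (join y x) z) (meet x y) = meet (join (meet y z) x) (join z y)"
      using assms(1) unfolding co_strongly_distributive_def skew_lattice_def
      by (intro csd[where m=meet and j=join]) auto
  qed
  from assms(1) have A: "\<And>x y z. meet (meet x y) z = meet x (meet y z)"
    "\<And>x y z. join (join x y) z = join x (join y z)"
    "\<And>x y. meet x (join x y) = x" "\<And>x y. join x (meet x y) = x"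
    unfolding skew_lattice_def by auto
  have e1: "\<And>x y z. meet (meet x y) (meet (join y x) z) = meet x (meet y z)"
    proof -
    fix x y z
    have "meet y (meet (join y x) z) = meet (meet y (join y x)) z" by (simp only: A(1))
    then show "meet (meet x y) (meet (join y x) z) = meet x (meet y z)" by (simp only: A(1) A(3))
  qed
  have e3: "\<And>x y z. join z (join y x) = join (join z y) (join (meet y z) x)"
    proof -
    fix x y z
    have "join y (join (meet y z) x) = join (join y (meet y z)) x" by (simp only: A(2))
    then show "join z (join y x) = join (join z y) (join (meet y z) x)" by (simp only: A(2) A(4))
  qed
  show ?thesis
    unfolding left_distributive_solution_def braided_def r_L_def r12_def r23_def
    by (rule ext) (auto simp: mid e1 e3[symmetric] split: prod.splits)
qed

end
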